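(* Let $n$ be an even positive integer, $a,b\in\mathbb{C}$, $b\ne0$. Let $A^{\dagger}$ be the $n\times n$ tridiagonal matrix with diagonal entries $a$ and $A^{\dagger}_{k,k+1}=A^{\dagger}_{k+1,k}=(-1)^{k+1}b$ for $k=1,\dots,n-1$, let $\tilde J^{\dagger}$ be the $n\times n$ exchange matrix ($\tilde J^{\dagger}_{i,n+1-i}=1$, all other entries $0$), and let $\tilde A^{\dagger}$ be the anti-tridiagonal matrix with entries $\tilde A^{\dagger}_{ij}=A^{\dagger}_{n+1-i,j}$ (i.e. $\tilde A^{\dagger}=\tilde J^{\dagger}A^{\dagger}$; its first row is $(0,\dots,0,b,a)$, its second row $(0,\dots,0,-b,a,b)$, etc.). Then for every positive integer $s$, $$(\tilde A^{\dagger})^s=\begin{cases}(A^{\dagger})^s, & s \text{ even},\\ \tilde J^{\dagger}(A^{\dagger})^s, & s\text{ odd}.\end{cases}$$ *)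

theory Defs
  imports Complex_Main "Jordan_Normal_Form.Matrix"
begin

(* Matrices are 0-indexed: entry (i,j) with i,j < n corresponds to the paper's (i+1,j+1). *)

(* A-dagger: diagonal a; paper's A_{k,k+1} = A_{k+1,k} = (-1)^(k+1) b for k = 1..n-1,
   i.e. 0-indexed entries (k,k+1) and (k+1,k) equal (-1)^k b for k = 0..n-2. *)
definition Adag :: "nat \<Rightarrow> complex \<Rightarrow> complex \<Rightarrow> complex mat" where
  "Adag n a b = mat n n (\<lambda>(i,j).
      if i = j then a
      else if j = i + 1 then (-1) ^ i * b
      else if i = j + 1 then (-1) ^ j * b
      else 0)"

definition Jdag :: "nat \<Rightarrow> complex mat" where
  "Jdag n = mat n n (\<lambda>(i,j). if j = n - 1 - i then 1 else 0)"

definition Atilde :: "nat \<Rightarrow> complex \<Rightarrow> complex \<Rightarrow> complex mat" where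
  "Atilde n a b = mat n n (\<lambda>(i,j). Adag n a b $$ (n - 1 - i, j))"

end

theory Submission
  imports Defs
begin

lemma Adag_carrier[simp]: "Adag n a b \<in> carrier_mat n n"
  by (simp add: Adag_def)
lemma Jdag_carrier[simp]: "Jdag n \<in> carrier_mat n n"
  by (simp add: Jdag_def)

lemma dims[simp]: "dim_row (Adag n a b) = n" "dim_col (Adag n a b) = n" "dim_row (Jdag n) = n" "dim_col (Jdag n) = n"
  by (auto simp: Adag_def Jdag_def)

lemma sum_sel: "finite S \<Longrightarrow> c \<in> S \<Longrightarrow> (\<Sum>k\<in>S. (if k = c then 1 else 0) * (f k::complex)) = f c"
  by (simp add: if_distrib[where f="\<lambda>x. x * _"] cong: if_cong)

lemma sum_sel2: "finite S \<Longrightarrow> c \<in> S \<Longrightarrow> (\<Sum>k\<in>S. (f k::complex) * (if c = k then 1 else 0)) = f c"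
  by (simp add: if_distrib[where f="\<lambda>x. _ * x"] cong: if_cong)

lemma J_mult: assumes "M \<in> carrier_mat n m" shows "Jdag n * M = mat n m (\<lambda>(i,j). M $$ (n - 1 - i, j))"
proof (rule eq_matI)
  fix i j assume i: "i < dim_row (mat n m (\<lambda>(i,j). M $$ (n - 1 - i, j)))" and j: "j < dim_col (mat n m (\<lambda>(i,j). M $$ (n - 1 - i, j)))"
  hence "i < n" "j < m" by auto
  thus "(Jdag n * M) $$ (i, j) = mat n m (\<lambda>(i,j). M $$ (n - 1 - i, j)) $$ (i, j)"
    using assms by (simp add: Jdag_def scalar_prod_def sum_sel)
qed (use assms in \<open>auto simp: Jdag_def\<close>)

lemma mult_J: assumes "M \<in> carrier_mat m n" shows "M * Jdag n = mat m n (\<lambda>(i,j). M $$ (i, n - 1 - j))"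
proof (rule eq_matI)
  fix i j assume i: "i < dim_row (mat m n (\<lambda>(i,j). M $$ (i, n - 1 - j)))" and j: "j < dim_col (mat m n (\<lambda>(i,j). M $$ (i, n - 1 - j)))"
  hence "i < m" "j < n" by auto
  thus "(M * Jdag n) $$ (i, j) = mat m n (\<lambda>(i,j). M $$ (i, n - 1 - j)) $$ (i, j)"
    using assms apply (simp add: Jdag_def scalar_prod_def)
    apply (subst sum.cong[OF refl, where h="\<lambda>k. M $$ (i,k) * (if n - 1 - j = k then 1 else 0)"])
     apply (auto simp: Jdag_def)[1]
    by (simp add: sum_sel2)
qed (use assms in \<open>auto simp: Jdag_def\<close>)

lemma JJ: "Jdag n * Jdag n = 1\<^sub>m n"
  by (subst J_mult[OF Jdag_carrier]) (rule eq_matI, auto simp: Jdag_def)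

lemma centro: assumes "even n" "i < n" "j < n"
  shows "Adag n a b $$ (n - 1 - i, n - 1 - j) = Adag n a b $$ (i, j)"
proof -
  have e: "((-1::complex) ^ (n - 2 - k)) = (-1) ^ k" if "k + 2 \<le> n" for k
  proof -
    have "even (n - 2 - k) = even k"
      using assms(1) that by (simp add: even_diff_nat)
    thus ?thesis by (simp add: minus_one_power_iff)
  qed
  have i': "n - 1 - i < n" and j': "n - 1 - j < n" using assms by auto
  have L: "Adag n a b $$ (n - 1 - i, n - 1 - j) =
      (if n - 1 - i = n - 1 - j then a
      else if n - 1 - j = n - 1 - i + 1 then (-1) ^ (n - 1 - i) * b
      else if n - 1 - i = n - 1 - j + 1 then (-1) ^ (n - 1 - j) * b
      else 0)" using i' j' by (simp add: Adag_def)
  have R: "Adag n a b $$ (i, j) =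
      (if i = j then a
      else if j = i + 1 then (-1) ^ i * b
      else if i = j + 1 then (-1) ^ j * b
      else 0)" using assms by (simp add: Adag_def)
  show ?thesis
  proof (cases "i = j")
    case True thus ?thesis using L R by simp
  next
    case ne: False
    show ?thesis
    proof (cases "j = i + 1")
      case True
      hence "n - 1 - i = n - 1 - j + 1" "n - 1 - j \<noteq> n - 1 - i + 1" "n - 1 - j = n - 2 - i"
        using assms by auto
      thus ?thesis using L R True ne e[of i] assms by simp
    next
      case F2: False
      show ?thesis
      proof (cases "i = j + 1")
        case True
        hence "n - 1 - j = n - 1 - i + 1" "n - 1 - i = n - 2 - j"
          using assms by auto
        thus ?thesis using L R True ne F2 e[of j] assms by simp
      next
        case False
        hence "n - 1 - j \<noteq> n - 1 - i + 1" "n - 1 - i \<noteq> n - 1 - j + 1" "n - 1 - i \<noteq> n - 1 - j"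
          using assms ne F2 by auto
        thus ?thesis using L R False ne F2 by simp
      qed
    qed
  qed
qed

lemma comm: assumes "even n" shows "Jdag n * Adag n a b = Adag n a b * Jdag n"
proof -
  have "Jdag n * Adag n a b = Jdag n * Adag n a b * (Jdag n * Jdag n)"
    by (metis JJ right_mult_one_mat Adag_carrier Jdag_carrier mult_carrier_mat)
  also have "Jdag n * Adag n a b * Jdag n = Adag n a b"
  proof -
    have "Jdag n * Adag n a b * Jdag n = mat n n (\<lambda>(i,j). Adag n a b $$ (n - 1 - i, n - 1 - j))"
      apply (subst J_mult[OF Adag_carrier])
      apply (subst mult_J[of _ n n])
       apply simp
      by (rule eq_matI) auto
    also have "\<dots> = Adag n a b"
      by (rule eq_matI) (use centro[OF assms] in auto)
    finally show ?thesis .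
  qed
  hence "Jdag n * Adag n a b * (Jdag n * Jdag n) = Adag n a b * Jdag n"
    by (metis Adag_carrier Jdag_carrier assoc_mult_mat mult_carrier_mat)
  finally show ?thesis .
qed

lemma comm_pow: assumes "even n" shows "Jdag n * (Adag n a b ^\<^sub>m s) = (Adag n a b ^\<^sub>m s) * Jdag n"
proof (induction s)
  case 0 show ?case by (simp add: left_mult_one_mat[OF Jdag_carrier] right_mult_one_mat[OF Jdag_carrier])
next
  case (Suc s)
  let ?A = "Adag n a b" and ?J = "Jdag n"
  have "?J * (?A ^\<^sub>m Suc s) = (?J * ?A ^\<^sub>m s) * ?A"
    by (simp, rule assoc_mult_mat[symmetric]) auto
  also have "\<dots> = ?A ^\<^sub>m s * (?J * ?A)"
    by (subst Suc.IH, rule assoc_mult_mat) auto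
  also have "\<dots> = ?A ^\<^sub>m s * (?A * ?J)" using comm[OF assms] by simp
  also have "\<dots> = ?A ^\<^sub>m Suc s * ?J"
    by (simp, rule assoc_mult_mat[symmetric]) auto
  finally show ?case .
qed

lemma Atilde_eq: "Atilde n a b = Jdag n * Adag n a b"
  by (subst J_mult[OF Adag_carrier]) (simp add: Atilde_def)

theorem lemma5:
  fixes n s :: nat and a b :: complex
  assumes "even n" and "n > 0" and "b \<noteq> 0" and "s > 0"
  shows "Atilde n a b ^\<^sub>m s =
           (if even s then Adag n a b ^\<^sub>m s else Jdag n * (Adag n a b ^\<^sub>m s))"
proof -
  let ?A = "Adag n a b" and ?J = "Jdag n"
  have "(?J * ?A) ^\<^sub>m t = (if even t then ?A ^\<^sub>m t else ?J * (?A ^\<^sub>m t))" for t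
  proof (induction t)
    case 0 show ?case by simp
  next
    case (Suc t)
    show ?case
    proof (cases "even t")
      case True
      have "(?J * ?A) ^\<^sub>m Suc t = ?A ^\<^sub>m t * (?J * ?A)" using Suc True by simp
      also have "\<dots> = (?A ^\<^sub>m t * ?J) * ?A" by (rule assoc_mult_mat[symmetric]) auto
      also have "\<dots> = (?J * ?A ^\<^sub>m t) * ?A" using comm_pow[OF assms(1)] by simp
      also have "\<dots> = ?J * ?A ^\<^sub>m Suc t" by (simp, rule assoc_mult_mat) auto
      finally show ?thesis using True by simp
    next
      case False
      have "(?J * ?A) ^\<^sub>m Suc t = (?J * ?A ^\<^sub>m t) * (?J * ?A)" using Suc False by simp
      also have "\<dots> = ((?A ^\<^sub>m t * ?J) * ?J) * ?A"
        using comm_pow[OF assms(1)] by (simp, metis Adag_carrier Jdag_carrier assoc_mult_mat mult_carrier_mat pow_carrier_mat)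
      also have "(?A ^\<^sub>m t * ?J) * ?J = ?A ^\<^sub>m t"
        by (subst assoc_mult_mat[of _ n n _ n _ n]) (auto simp: JJ)
      finally show ?thesis using False by simp
    qed
  qed
  thus ?thesis by (simp add: Atilde_eq)
qed

end
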